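(* Suppose all agents are strategic and have complete and perfect information. For any categorial sequential allocation mechanism $f_\mathcal O$, any agent $j$, and any profile, the rank (in $R_j$) of the bundle allocated to agent $j$ in the subgame-perfect Nash equilibrium is at most $n^p+1-\prod_{i=1}^{p}k_{j,i}$.
   Context: Basic categorized domain: $n$ agents, $p$ categories $D_i=\{1,\ldots,n\}$ of indivisible items, bundles $\mathfrak D=D_1\times\cdots\times D_p$; each agent $j$ has a linear order $R_j$ over $\mathfrak D$. The rank of a bundle in $R_j$ is its position (top $=1$, bottom $=n^p$). CSAM $f_\mathcal O$: given a linear order $\mathcal O$ over $\{1,\ldots,n\}\times\{1,\ldots,p\}$, in rounds $t=1,\ldots,np$, if the $t$-th element of $\mathcal O$ is $(j,i)$ then agent $j$ chooses an item $d_{j,i}$ from the items of $D_i$ not yet chosen; all choices are observed by all agents; agent $j$ finally receives $(d_{j,1},\ldots,d_{j,p})$. With strategic agents with complete and perfect information, this is an extensive-form game in which each agent's preference over outcomes is her linear order $R_j$ over her final bundle; its subgame-perfect Nash equilibrium (computed by backward induction) is unique since preferences are linear orders. $k_{j,i}$ denotes the number of items of $D_i$ still available right before agent $j$ chooses from $D_i$, i.e. $n$ minus the number of agents who choose from $D_i$ before $j$ in $\mathcal O$. *)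

theory Defs
  imports Main
begin

(* Agents are 0..<n, categories 0..<p, items of each category 0..<n (0-based). *)

definition bundles :: "nat \<Rightarrow> nat \<Rightarrow> nat list set" where
  "bundles n p = {b. length b = p \<and> set b \<subseteq> {..<n}}"

(* A linear order over {0..<n} x {0..<p}, given as a list enumerating it. *)
definition valid_order :: "nat \<Rightarrow> nat \<Rightarrow> (nat \<times> nat) list \<Rightarrow> bool" where
  "valid_order n p sq \<longleftrightarrow> distinct sq \<and> set sq = {..<n} \<times> {..<p}"

definition pos :: "(nat \<times> nat) list \<Rightarrow> nat \<times> nat \<Rightarrow> nat" where
  "pos sq x = (THE t. t < length sq \<and> sq ! t = x)"

(* bundle of agent j from a complete history h (h ! t = item chosen in round t) *)
definition bundle_of :: "(nat \<times> nat) list \<Rightarrow> nat \<Rightarrow> nat list \<Rightarrow> nat \<Rightarrow> nat list" where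
  "bundle_of sq p h j = map (\<lambda>i. h ! pos sq (j, i)) [0..<p]"

definition avail :: "nat \<Rightarrow> (nat \<times> nat) list \<Rightarrow> nat list \<Rightarrow> nat \<Rightarrow> nat set" where
  "avail n sq h i = {d. d < n \<and> (\<forall>t < length h. snd (sq ! t) = i \<longrightarrow> h ! t \<noteq> d)}"

(* Backward induction: spe ... k h is the complete history reached from history h
   (with k rounds remaining) when every agent plays her subgame-perfect choice.
   (b, b') \<in> R j means agent j weakly prefers bundle b to bundle b'. *)
primrec spe :: "nat \<Rightarrow> nat \<Rightarrow> (nat \<times> nat) list \<Rightarrow> (nat \<Rightarrow> nat list rel) \<Rightarrow> nat \<Rightarrow> nat list \<Rightarrow> nat list" where
  "spe n p sq R 0 h = h"
| "spe n p sq R (Suc k) h =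
     (let j = fst (sq ! length h); i = snd (sq ! length h); A = avail n sq h i;
          best = (THE d. d \<in> A \<and> (\<forall>d'\<in>A.
                    (bundle_of sq p (spe n p sq R k (h @ [d])) j,
                     bundle_of sq p (spe n p sq R k (h @ [d'])) j) \<in> R j))
      in spe n p sq R k (h @ [best]))"

definition spne_outcome :: "nat \<Rightarrow> nat \<Rightarrow> (nat \<times> nat) list \<Rightarrow> (nat \<Rightarrow> nat list rel) \<Rightarrow> nat list" where
  "spne_outcome n p sq R = spe n p sq R (length sq) []"

(* rank of bundle b in R j: number of bundles weakly preferred to b (top = 1) *)
definition rank :: "nat \<Rightarrow> nat \<Rightarrow> (nat \<Rightarrow> nat list rel) \<Rightarrow> nat \<Rightarrow> nat list \<Rightarrow> nat" where
  "rank n p R j b = card {b' \<in> bundles n p. (b', b) \<in> R j}"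

(* k_{j,i}: n minus the number of agents choosing from D_i before j *)
definition kval :: "nat \<Rightarrow> (nat \<times> nat) list \<Rightarrow> nat \<Rightarrow> nat \<Rightarrow> nat" where
  "kval n sq j i = n - card {t. t < pos sq (j, i) \<and> snd (sq ! t) = i}"

end

theory Submission
  imports Defs
begin

lemma lin_facts:
  assumes "linear_order_on B r"
  shows "\<And>x. x \<in> B \<Longrightarrow> (x,x) \<in> r"
    and "\<And>x y z. (x,y) \<in> r \<Longrightarrow> (y,z) \<in> r \<Longrightarrow> (x,z) \<in> r"
    and "\<And>x y. (x,y) \<in> r \<Longrightarrow> (y,x) \<in> r \<Longrightarrow> x = y"
    and "\<And>x y. x \<in> B \<Longrightarrow> y \<in> B \<Longrightarrow> x \<noteq> y \<Longrightarrow> (x,y) \<in> r \<or> (y,x) \<in> r"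
    and "r \<subseteq> B \<times> B"
  using assms unfolding linear_order_on_def partial_order_on_def preorder_on_def
    refl_on_def total_on_def antisym_on_def trans_def
  by blast+

lemma the_best:
  assumes fin: "finite A" and ne: "A \<noteq> {}" and lin: "linear_order_on B r"
    and inj: "inj_on f A" and sub: "f ` A \<subseteq> B"
  shows "(THE d. d \<in> A \<and> (\<forall>d'\<in>A. (f d, f d') \<in> r)) \<in> A \<and>
         (\<forall>d'\<in>A. (f (THE d. d \<in> A \<and> (\<forall>d'\<in>A. (f d, f d') \<in> r)), f d') \<in> r)"
proof -
  note L = lin_facts[OF lin]
  have ex: "\<exists>d\<in>A. \<forall>d'\<in>A. (f d, f d') \<in> r" using fin ne sub inj
  proof (induction A rule: finite_ne_induct)
    case (singleton x)
    then show ?case using L(1) by auto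
  next
    case (insert x F)
    then obtain m where m: "m \<in> F" "\<forall>d'\<in>F. (f m, f d') \<in> r"
      by (auto simp: inj_on_insert)
    have fx: "f x \<in> B" "f m \<in> B" using insert.prems m by auto
    have ne: "f x \<noteq> f m" using insert.prems insert.hyps m
      by (metis inj_onD insertCI)
    show ?case
    proof (cases "(f x, f m) \<in> r")
      case True
      then show ?thesis using m L(1,2) fx by blast
    next
      case False
      then have "(f m, f x) \<in> r" using L(4)[OF fx ne] by blast
      then show ?thesis using m by blast
    qed
  qed
  have "\<exists>!d. d \<in> A \<and> (\<forall>d'\<in>A. (f d, f d') \<in> r)"
  proof -
    obtain d where d: "d \<in> A" "\<forall>d'\<in>A. (f d, f d') \<in> r" using ex by blast
    { fix e assume e: "e \<in> A" "\<forall>d'\<in>A. (f e, f d') \<in> r"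
      have "f e = f d" using L(3) d e by blast
      then have "e = d" using inj d e by (metis inj_onD) }
    then show ?thesis using d by blast
  qed
  from theI'[OF this] show ?thesis by blast
qed

context
  fixes n p :: nat and sq :: "(nat \<times> nat) list" and R :: "nat \<Rightarrow> nat list rel"
  assumes vo: "valid_order n p sq"
    and lin: "\<forall>a<n. linear_order_on (bundles n p) (R a)"
begin

lemma dist: "distinct sq" and setsq: "set sq = {..<n} \<times> {..<p}"
  using vo by (auto simp: valid_order_def)

lemma pos_nth: "t < length sq \<Longrightarrow> pos sq (sq!t) = t"
  unfolding pos_def using dist by (auto simp: nth_eq_iff_index_eq)

lemma pos_in: "x \<in> set sq \<Longrightarrow> pos sq x < length sq \<and> sq ! pos sq x = x"
  by (metis in_set_conv_nth pos_nth)

lemma sq_in: "t < length sq \<Longrightarrow> fst (sq!t) < n \<and> snd (sq!t) < p"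
  using setsq nth_mem by (metis SigmaE fst_conv lessThan_iff snd_conv)

lemma pos_j: "j < n \<Longrightarrow> i < p \<Longrightarrow> pos sq (j,i) < length sq \<and> sq ! pos sq (j,i) = (j,i)"
  using pos_in setsq by auto

lemma avail_card:
  assumes lh: "length h < length sq"
  shows "n - card {t. t < length h \<and> snd (sq!t) = snd (sq!length h)}
           \<le> card (avail n sq h (snd (sq!length h)))"
    and "card {t. t < length h \<and> snd (sq!t) = snd (sq!length h)} < n"
    and "finite (avail n sq h (snd (sq!length h)))"
proof -
  define i where "i = snd (sq!length h)"
  define T where "T = {t. t < length h \<and> snd (sq!t) = i}"
  have finT: "finite T" unfolding T_def by auto
  have "{..<n} - (\<lambda>t. h!t) ` T \<subseteq> avail n sq h i"
    unfolding avail_def T_def by auto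
  moreover have fa: "finite (avail n sq h i)" unfolding avail_def by auto
  ultimately have "card ({..<n} - (\<lambda>t. h!t) ` T) \<le> card (avail n sq h i)"
    by (simp add: card_mono)
  moreover have "card {..<n} - card ((\<lambda>t. h!t) ` T) \<le> card ({..<n} - (\<lambda>t. h!t) ` T)"
    by (rule diff_card_le_card_Diff) (use finT in auto)
  moreover have "card ((\<lambda>t. h!t) ` T) \<le> card T" using finT card_image_le by blast
  ultimately show "n - card {t. t < length h \<and> snd (sq!t) = snd (sq!length h)}
           \<le> card (avail n sq h (snd (sq!length h)))" unfolding T_def i_def by simp
  show "finite (avail n sq h (snd (sq!length h)))" using fa i_def by simp
  have inj: "inj_on (nth sq) T" using dist lh unfolding T_def
    by (intro inj_on_nth) auto
  have "nth sq ` T \<subseteq> ({..<n} \<times> {i}) - {sq ! length h}"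
  proof
    fix x assume "x \<in> nth sq ` T"
    then obtain t where t: "t \<in> T" "x = sq!t" by blast
    then have "t < length h" "snd (sq!t) = i" unfolding T_def by auto
    moreover have "sq!t \<noteq> sq!length h" using dist lh \<open>t < length h\<close>
      by (simp add: nth_eq_iff_index_eq)
    ultimately show "x \<in> ({..<n} \<times> {i}) - {sq ! length h}"
      using sq_in[of t] lh t by (cases "sq!t") auto
  qed
  then have "card (nth sq ` T) \<le> card (({..<n} \<times> {i}) - {sq ! length h})"
    by (intro card_mono) auto
  moreover have "sq ! length h \<in> {..<n} \<times> {i}" using sq_in[OF lh] i_def
    by (cases "sq ! length h") auto
  moreover have "n > 0" using sq_in[OF lh] by auto
  ultimately have "card T < n" using card_image[OF inj] by (simp add: card_cartesian_product)
  then show "card {t. t < length h \<and> snd (sq!t) = snd (sq!length h)} < n"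
    unfolding T_def i_def .
qed

lemma best_lemma:
  assumes IH: "\<And>h'. length h' + k = length sq \<Longrightarrow> \<forall>x\<in>set h'. x < n \<Longrightarrow>
        (\<exists>s. spe n p sq R k h' = h' @ s) \<and> length (spe n p sq R k h') = length sq
        \<and> (\<forall>x\<in>set (spe n p sq R k h'). x < n)"
    and lh: "length h + Suc k = length sq" and hn: "\<forall>x\<in>set h. x < n"
  shows "\<exists>best. best \<in> avail n sq h (snd (sq!length h)) \<and>
     (\<forall>d'\<in>avail n sq h (snd (sq!length h)).
        (bundle_of sq p (spe n p sq R k (h @ [best])) (fst (sq!length h)),
         bundle_of sq p (spe n p sq R k (h @ [d'])) (fst (sq!length h))) \<in> R (fst (sq!length h)))
     \<and> spe n p sq R (Suc k) h = spe n p sq R k (h @ [best])"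
proof -
  define a where "a = fst (sq!length h)"
  define i where "i = snd (sq!length h)"
  define A where "A = avail n sq h i"
  define f where "f = (\<lambda>d. bundle_of sq p (spe n p sq R k (h @ [d])) a)"
  have lh': "length h < length sq" using lh by simp
  have ai: "a < n" "i < p" using sq_in[OF lh'] a_def i_def by auto
  have posai: "pos sq (a,i) = length h" using pos_nth[OF lh'] a_def i_def by simp
  have fin: "finite A" using avail_card(3)[OF lh'] A_def i_def by simp
  have ne: "A \<noteq> {}" using avail_card(1,2)[OF lh'] A_def i_def fin by fastforce
  have IHd: "(\<exists>s. spe n p sq R k (h@[d]) = (h@[d]) @ s) \<and> length (spe n p sq R k (h@[d])) = length sq
        \<and> (\<forall>x\<in>set (spe n p sq R k (h@[d])). x < n)" if dA: "d \<in> A" for d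
  proof -
    have l1: "length (h@[d]) + k = length sq" using lh by simp
    have l2: "\<forall>x\<in>set (h@[d]). x < n" using hn dA unfolding A_def avail_def by auto
    show ?thesis using IH[OF l1 l2] .
  qed
  have fi: "f d ! i = d" if dA: "d \<in> A" for d
  proof -
    obtain s where "spe n p sq R k (h@[d]) = (h@[d]) @ s" using IHd[OF dA] by blast
    then show ?thesis unfolding f_def bundle_of_def using ai posai
      by (simp add: nth_append)
  qed
  have inj: "inj_on f A" by (metis fi inj_onI)
  have sub: "f ` A \<subseteq> bundles n p"
  proof
    fix b assume "b \<in> f ` A"
    then obtain d where d: "d \<in> A" "b = f d" by blast
    have "\<forall>i'<p. spe n p sq R k (h@[d]) ! pos sq (a, i') < n"
      using IHd[OF d(1)] pos_j ai(1) by (metis nth_mem)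
    then show "b \<in> bundles n p" unfolding d(2) f_def bundle_of_def bundles_def
      by auto
  qed
  have linA: "linear_order_on (bundles n p) (R a)" using lin ai by blast
  note tb = the_best[OF fin ne linA inj sub]
  have eq: "spe n p sq R (Suc k) h = spe n p sq R k (h @ [THE d. d \<in> A \<and> (\<forall>d'\<in>A. (f d, f d') \<in> R a)])"
    unfolding A_def f_def a_def i_def by (simp add: Let_def)
  show ?thesis using tb eq unfolding A_def f_def a_def i_def by blast
qed

lemma spe_wd:
  "length h + k = length sq \<Longrightarrow> \<forall>x\<in>set h. x < n \<Longrightarrow>
   (\<exists>s. spe n p sq R k h = h @ s) \<and> length (spe n p sq R k h) = length sq
        \<and> (\<forall>x\<in>set (spe n p sq R k h). x < n)"
proof (induction k arbitrary: h)
  case 0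
  then show ?case by simp
next
  case (Suc k)
  obtain best where b: "best \<in> avail n sq h (snd (sq!length h))"
    "spe n p sq R (Suc k) h = spe n p sq R k (h @ [best])"
    using best_lemma[OF Suc.IH Suc.prems] by blast
  have "best < n" using b(1) unfolding avail_def by auto
  then have hb: "\<forall>x\<in>set (h@[best]). x < n" using Suc.prems(2) by simp
  have lb: "length (h@[best]) + k = length sq" using Suc.prems(1) by simp
  obtain s where s: "spe n p sq R k (h@[best]) = (h@[best]) @ s"
     "length (spe n p sq R k (h@[best])) = length sq"
     "\<forall>x\<in>set (spe n p sq R k (h@[best])). x < n"
    using Suc.IH[OF lb hb] by blast
  show ?case unfolding b(2) using s by (metis append_assoc)
qed


lemma bundle_nth: "i < p \<Longrightarrow> bundle_of sq p h j ! i = h ! pos sq (j,i)"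
  unfolding bundle_of_def by simp

lemma bundle_in:
  assumes "j < n" "\<forall>i<p. pos sq (j,i) < length h" "\<forall>x\<in>set h. x < n"
  shows "bundle_of sq p h j \<in> bundles n p"
  using assms unfolding bundle_of_def bundles_def by (auto simp: nth_mem)

lemma count:
  assumes j: "j < n"
  shows "length h + k = length sq \<Longrightarrow> \<forall>x\<in>set h. x < n \<Longrightarrow>
    \<exists>X \<subseteq> bundles n p. (\<Prod>i\<in>{i. i < p \<and> length h \<le> pos sq (j,i)}. kval n sq j i) \<le> card X
     \<and> (\<forall>b\<in>X. (bundle_of sq p (spe n p sq R k h) j, b) \<in> R j
          \<and> (\<forall>i<p. pos sq (j,i) < length h \<longrightarrow> b!i = h!pos sq (j,i)))"
proof (induction k arbitrary: h)
  case 0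
  have lj: "linear_order_on (bundles n p) (R j)" using lin j by blast
  have e: "{i. i < p \<and> length h \<le> pos sq (j,i)} = {}" using pos_j[OF j] 0 by fastforce
  have pl: "\<forall>i<p. pos sq (j,i) < length h" using pos_j[OF j] 0 by simp
  have B: "bundle_of sq p h j \<in> bundles n p" using bundle_in[OF j pl] 0 by simp
  show ?case
    apply (rule exI[of _ "{bundle_of sq p h j}"])
    using B lin_facts(1)[OF lj B] by (simp add: e bundle_nth)
next
  case (Suc k)
  have lh: "length h < length sq" using Suc.prems by simp
  define a where "a = fst (sq!length h)"
  define i0 where "i0 = snd (sq!length h)"
  define A where "A = avail n sq h i0"
  obtain best where b: "best \<in> A"
    "\<forall>d'\<in>A. (bundle_of sq p (spe n p sq R k (h @ [best])) a,
         bundle_of sq p (spe n p sq R k (h @ [d'])) a) \<in> R a"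
    "spe n p sq R (Suc k) h = spe n p sq R k (h @ [best])"
    using best_lemma[OF spe_wd Suc.prems] unfolding A_def a_def i0_def by blast
  have ai: "a < n" "i0 < p" using sq_in[OF lh] a_def i0_def by auto
  have posai: "pos sq (a,i0) = length h" using pos_nth[OF lh] a_def i0_def by simp
  have An: "\<And>d. d \<in> A \<Longrightarrow> \<forall>x\<in>set (h@[d]). x < n" using Suc.prems unfolding A_def avail_def by auto
  have lhd: "\<And>d. length (h@[d]) + k = length sq" using Suc.prems by simp
  show ?case
  proof (cases "a = j")
    case False
    obtain X where X: "X \<subseteq> bundles n p"
      "(\<Prod>i\<in>{i. i < p \<and> length (h@[best]) \<le> pos sq (j,i)}. kval n sq j i) \<le> card X"
      "\<forall>b\<in>X. (bundle_of sq p (spe n p sq R k (h@[best])) j, b) \<in> R j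
          \<and> (\<forall>i<p. pos sq (j,i) < length (h@[best]) \<longrightarrow> b!i = (h@[best])!pos sq (j,i))"
      using Suc.IH[OF lhd An[OF b(1)]] by blast
    have neq: "\<And>i. i < p \<Longrightarrow> pos sq (j,i) \<noteq> length h"
      using pos_j[OF j] False a_def by (metis fst_conv)
    have se: "{i. i < p \<and> length (h@[best]) \<le> pos sq (j,i)} = {i. i < p \<and> length h \<le> pos sq (j,i)}"
      using neq by fastforce
    show ?thesis
      apply (rule exI[of _ X])
      using X se neq b(3) by (auto simp: nth_append)
  next
    case True
    have "\<forall>d\<in>A. \<exists>X. X \<subseteq> bundles n p \<and>
      (\<Prod>i\<in>{i. i < p \<and> length (h@[d]) \<le> pos sq (j,i)}. kval n sq j i) \<le> card X
      \<and> (\<forall>b\<in>X. (bundle_of sq p (spe n p sq R k (h@[d])) j, b) \<in> R j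
          \<and> (\<forall>i<p. pos sq (j,i) < length (h@[d]) \<longrightarrow> b!i = (h@[d])!pos sq (j,i)))"
      using Suc.IH[OF lhd An] by blast
    then obtain XF where XF0: "\<forall>d\<in>A. XF d \<subseteq> bundles n p \<and>
      (\<Prod>i\<in>{i. i < p \<and> length (h@[d]) \<le> pos sq (j,i)}. kval n sq j i) \<le> card (XF d)
      \<and> (\<forall>b\<in>XF d. (bundle_of sq p (spe n p sq R k (h@[d])) j, b) \<in> R j
          \<and> (\<forall>i<p. pos sq (j,i) < length (h@[d]) \<longrightarrow> b!i = (h@[d])!pos sq (j,i)))"
      by (rule bchoice[THEN exE])
    have XF: "\<And>d. d \<in> A \<Longrightarrow> XF d \<subseteq> bundles n p \<and>
      (\<Prod>i\<in>{i. i < p \<and> length (h@[d]) \<le> pos sq (j,i)}. kval n sq j i) \<le> card (XF d)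
      \<and> (\<forall>b\<in>XF d. (bundle_of sq p (spe n p sq R k (h@[d])) j, b) \<in> R j
          \<and> (\<forall>i<p. pos sq (j,i) < length (h@[d]) \<longrightarrow> b!i = (h@[d])!pos sq (j,i)))"
      using XF0 by (rule bspec)
    note XF1 = XF[THEN conjunct1]
    note XF2 = XF[THEN conjunct2, THEN conjunct1]
    have XF3: "\<And>d b. d \<in> A \<Longrightarrow> b \<in> XF d \<Longrightarrow> (bundle_of sq p (spe n p sq R k (h@[d])) j, b) \<in> R j"
      using XF[THEN conjunct2, THEN conjunct2] by (meson bspec conjunct1)
    have XF4: "\<And>d b. d \<in> A \<Longrightarrow> b \<in> XF d \<Longrightarrow> (\<forall>i<p. pos sq (j,i) < length (h@[d]) \<longrightarrow> b!i = (h@[d])!pos sq (j,i))"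
      using XF[THEN conjunct2, THEN conjunct2] by (meson bspec conjunct2)
    define P' where "P' = (\<Prod>i\<in>{i. i < p \<and> Suc (length h) \<le> pos sq (j,i)}. kval n sq j i)"
    have lj: "linear_order_on (bundles n p) (R j)" using lin j by blast
    have finb: "finite (bundles n p)" unfolding bundles_def
      using finite_lists_length_eq[of "{..<n}" p] by (simp add: conj_commute)
    have finA: "finite A" using avail_card(3)[OF lh] A_def i0_def by simp
    have finX: "\<And>d. d \<in> A \<Longrightarrow> finite (XF d)" using XF1 finb finite_subset by meson
    have Xi0: "\<And>d b. d \<in> A \<Longrightarrow> b \<in> XF d \<Longrightarrow> b ! i0 = d"
    proof -
      fix d b assume "d \<in> A" "b \<in> XF d"
      then have "b ! i0 = (h@[d]) ! pos sq (j,i0)" using XF4 ai True posai by simp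
      then show "b ! i0 = d" using True posai by simp
    qed
    have disj: "\<forall>d\<in>A. \<forall>d'\<in>A. d \<noteq> d' \<longrightarrow> XF d \<inter> XF d' = {}"
      using Xi0 by blast
    have cardU: "card (\<Union>d\<in>A. XF d) = (\<Sum>d\<in>A. card (XF d))"
      by (rule card_UN_disjoint[OF finA]) (use finX disj in auto)
    have "(\<Sum>d\<in>A. P') \<le> (\<Sum>d\<in>A. card (XF d))"
      by (rule sum_mono) (use XF2 P'_def in simp)
    then have c1: "card A * P' \<le> card (\<Union>d\<in>A. XF d)" using cardU by simp
    have kA: "kval n sq j i0 \<le> card A"
      using avail_card(1)[OF lh] True posai unfolding kval_def A_def i0_def a_def by simp
    have sins: "{i. i < p \<and> length h \<le> pos sq (j,i)} = insert i0 {i. i < p \<and> Suc (length h) \<le> pos sq (j,i)}"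
    proof -
      have "\<And>i. i < p \<Longrightarrow> pos sq (j,i) = length h \<Longrightarrow> i = i0"
        using pos_j[OF j] posai True ai by (metis prod.inject)
      note eqi = this
      have pj: "pos sq (j,i0) = length h" using posai True by simp
      show ?thesis
      proof (rule set_eqI, rule iffI)
        fix x assume "x \<in> {i. i < p \<and> length h \<le> pos sq (j,i)}"
        then have x: "x < p" "length h \<le> pos sq (j,x)" by auto
        show "x \<in> insert i0 {i. i < p \<and> Suc (length h) \<le> pos sq (j,i)}"
        proof (cases "pos sq (j,x) = length h")
          case True
          then show ?thesis using eqi x by simp
        next
          case False
          then show ?thesis using x by simp
        qed
      next
        fix x assume "x \<in> insert i0 {i. i < p \<and> Suc (length h) \<le> pos sq (j,i)}"
        then show "x \<in> {i. i < p \<and> length h \<le> pos sq (j,i)}" using ai(2) pj by auto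
      qed
    qed
    have "(\<Prod>i\<in>{i. i < p \<and> length h \<le> pos sq (j,i)}. kval n sq j i) = kval n sq j i0 * P'"
      unfolding sins P'_def using posai True by (subst prod.insert) auto
    also have "\<dots> \<le> card A * P'" using kA by simp
    finally have c2: "(\<Prod>i\<in>{i. i < p \<and> length h \<le> pos sq (j,i)}. kval n sq j i) \<le> card (\<Union>d\<in>A. XF d)"
      using c1 by linarith
    have tr: "\<And>x y z. (x,y) \<in> R j \<Longrightarrow> (y,z) \<in> R j \<Longrightarrow> (x,z) \<in> R j" using lin_facts(2)[OF lj] by blast
    show ?thesis
    proof (rule exI[of _ "\<Union>d\<in>A. XF d"], intro conjI ballI)
      show "(\<Union>d\<in>A. XF d) \<subseteq> bundles n p" using XF1 by (simp add: UN_least)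
      show "(\<Prod>i\<in>{i. i < p \<and> length h \<le> pos sq (j,i)}. kval n sq j i) \<le> card (\<Union>d\<in>A. XF d)" by (rule c2)
    next
      fix x assume "x \<in> (\<Union>d\<in>A. XF d)"
      then obtain d where d: "d \<in> A" "x \<in> XF d" by blast
      have "(bundle_of sq p (spe n p sq R k (h @ [best])) j,
         bundle_of sq p (spe n p sq R k (h @ [d])) j) \<in> R j" using b(2) d(1) True by blast
      then show "(bundle_of sq p (spe n p sq R (Suc k) h) j, x) \<in> R j"
        using XF3[OF d] b(3) tr by metis
      show "\<forall>i<p. pos sq (j,i) < length h \<longrightarrow> x!i = h!pos sq (j,i)"
        using XF4[OF d] by (auto simp: nth_append)
    qed
  qed
qed
end

theorem proposition6:
  fixes n p :: nat and sq :: "(nat \<times> nat) list" and R :: "nat \<Rightarrow> nat list rel" and j :: nat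
  assumes "valid_order n p sq"
    and "\<forall>a<n. linear_order_on (bundles n p) (R a)"
    and "j < n"
  shows "rank n p R j (bundle_of sq p (spne_outcome n p sq R) j)
           \<le> n ^ p + 1 - (\<Prod>i<p. kval n sq j i)"
proof -
  note vo = assms(1) and lin = assms(2) and j = assms(3)
  define B where "B = bundle_of sq p (spne_outcome n p sq R) j"
  have l0: "length ([]::nat list) + length sq = length sq" by simp
  have n0: "\<forall>x\<in>set ([]::nat list). x < n" by simp
  have wd: "length (spne_outcome n p sq R) = length sq" "\<forall>x\<in>set (spne_outcome n p sq R). x < n"
    using spe_wd[OF vo lin l0 n0] unfolding spne_outcome_def by auto
  obtain X where X: "X \<subseteq> bundles n p"
    "(\<Prod>i\<in>{i. i < p \<and> length ([]::nat list) \<le> pos sq (j,i)}. kval n sq j i) \<le> card X"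
    "\<forall>b\<in>X. (bundle_of sq p (spe n p sq R (length sq) []) j, b) \<in> R j
          \<and> (\<forall>i<p. pos sq (j,i) < length ([]::nat list) \<longrightarrow> b!i = ([]::nat list)!pos sq (j,i))"
    using count[OF vo lin j l0 n0] by blast
  have pe: "{i. i < p \<and> length ([]::nat list) \<le> pos sq (j,i)} = {..<p}" by auto
  have Xp: "(\<Prod>i<p. kval n sq j i) \<le> card X" using X(2) pe by simp
  have lj: "linear_order_on (bundles n p) (R j)" using lin j by blast
  note L = lin_facts[OF lj]
  have pl: "\<forall>i<p. pos sq (j,i) < length (spne_outcome n p sq R)"
    using pos_j[OF vo lin j] wd(1) by simp
  have Bin: "B \<in> bundles n p" unfolding B_def using bundle_in[OF vo lin j pl wd(2)] .
  define U where "U = {b'\<in>bundles n p. (b', B) \<in> R j}"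
  define W where "W = {b\<in>bundles n p. (B, b) \<in> R j}"
  have finb: "finite (bundles n p)" unfolding bundles_def
    using finite_lists_length_eq[of "{..<n}" p] by (simp add: conj_commute)
  have cb: "card (bundles n p) = n ^ p" unfolding bundles_def
    using card_lists_length_eq[of "{..<n}" p] by (simp add: conj_commute)
  have XW: "X \<subseteq> W" using X(1,3) unfolding W_def B_def spne_outcome_def by blast
  have UW: "U \<union> W = bundles n p"
  proof
    show "U \<union> W \<subseteq> bundles n p" unfolding U_def W_def by blast
    show "bundles n p \<subseteq> U \<union> W"
    proof
      fix b assume b: "b \<in> bundles n p"
      show "b \<in> U \<union> W"
      proof (cases "b = B")
        case True then show ?thesis using L(1)[OF Bin] Bin unfolding U_def by simp
      next
        case False then show ?thesis using L(4)[OF b Bin] b unfolding U_def W_def by blast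
      qed
    qed
  qed
  have UiW: "U \<inter> W \<subseteq> {B}" unfolding U_def W_def using L(3) by blast
  have fU: "finite U" "finite W" unfolding U_def W_def using finb by auto
  have "card U + card W = card (U \<union> W) + card (U \<inter> W)" using card_Un_Int[OF fU] .
  also have "\<dots> \<le> n ^ p + 1" using UW cb card_mono[OF _ UiW] by simp
  finally have s: "card U + card W \<le> n ^ p + 1" .
  have "card X \<le> card W" using card_mono[OF fU(2) XW] .
  then have "card U \<le> n ^ p + 1 - (\<Prod>i<p. kval n sq j i)" using s Xp by linarith
  then show ?thesis unfolding rank_def U_def B_def .
qed

end
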